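(* Let \[0 \to A \xrightarrow{f} B \xrightarrow{g} C \to 0\] be a sequence of Hausdorff topological abelian groups and continuous homomorphisms which is exact as a sequence of abelian groups. Suppose that $f$ is a closed map and that for every compact subset $K \subseteq C$ there is a compact subset $B' \subseteq B$ with $g(B') \supseteq K$. Then the induced sequence of condensed abelian groups \[0 \to \underline{A} \to \underline{B} \to \underline{C} \to 0\] is exact.
   Context: An extremally disconnected set is a projective object in the category of compact Hausdorff spaces. A condensed set (resp. condensed abelian group) is a functor $T$ from the opposite of the category of extremally disconnected sets to sets (resp. abelian groups) with $T(\emptyset)=*$, $T(S_1\sqcup S_2)=T(S_1)\times T(S_2)$, and which is the left Kan extension of its restriction to $\kappa$-small extremally disconnected sets for some uncountable strong limit cardinal $\kappa$. For a T1 topological space (resp. topological abelian group) $X$, its condensation $\underline{X}$ is the condensed set (resp. condensed abelian group) $S \mapsto C(S,X)$, the continuous maps from $S$ to $X$. In condensed abelian groups, kernels and cokernels are computed sectionwise, so a sequence is exact iff it is exact after evaluation at every extremally disconnected $S$. *)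

theory Defs
  imports "HOL-Analysis.Analysis"
begin

text \<open>An extremally disconnected set: a compact Hausdorff space in which the closure
  of every open set is open (equivalently, a projective object of CHaus).\<close>
definition extremally_disconnected :: "'d topology \<Rightarrow> bool" where
  "extremally_disconnected S \<longleftrightarrow> compact_space S \<and> Hausdorff_space S \<and>
     (\<forall>U. openin S U \<longrightarrow> openin S (S closure_of U))"

text \<open>Sections of the condensation of a topological abelian group X at S:
  the abelian group C(S,X) of continuous maps, represented by functions
  that are 0 outside the underlying set of S.\<close>
definition cond_sections :: "'d topology \<Rightarrow> ('d \<Rightarrow> 'x::{topological_space, zero}) set" where
  "cond_sections S = {\<phi>. continuous_map S euclidean \<phi> \<and> (\<forall>s. s \<notin> topspace S \<longrightarrow> \<phi> s = 0)}"

definition cond_map :: "('x \<Rightarrow> 'y) \<Rightarrow> ('d \<Rightarrow> 'x) \<Rightarrow> ('d \<Rightarrow> 'y)" where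
  "cond_map f \<phi> = f \<circ> \<phi>"

definition short_exact :: "'a set \<Rightarrow> 'b set \<Rightarrow> 'c set \<Rightarrow> ('a \<Rightarrow> 'b) \<Rightarrow> ('b \<Rightarrow> 'c) \<Rightarrow> 'c \<Rightarrow> bool" where
  "short_exact X Y Z p q z \<longleftrightarrow> p ` X \<subseteq> Y \<and> q ` Y \<subseteq> Z \<and> inj_on p X \<and>
     p ` X = {y \<in> Y. q y = z} \<and> q ` Y = Z"

end

theory Submission
  imports Defs
begin

lemma finite_chain_max:
  assumes "finite G" "G \<noteq> {}" "chain\<^sub>\<subseteq> G"
  shows "\<exists>V\<in>G. \<forall>W\<in>G. W \<subseteq> V"
  using assms
proof (induction G rule: finite_ne_induct)
  case (singleton x) then show ?case by auto
next
  case (insert x F)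
  have "chain\<^sub>\<subseteq> F" using insert.prems by (auto simp: chain_subset_def)
  then obtain V where V: "V \<in> F" "\<forall>W\<in>F. W \<subseteq> V" using insert.IH by blast
  have "x \<subseteq> V \<or> V \<subseteq> x" using insert.prems V(1) by (auto simp: chain_subset_def)
  then show ?case using V by blast
qed

lemma Hausdorff_euclidean_t2: "Hausdorff_space (euclidean :: 'a::t2_space topology)"
  unfolding Hausdorff_space_def disjnt_def by (metis open_openin separation_t2)

lemma ed_section:
  fixes S :: "'d topology" and P :: "'p topology" and \<pi> :: "'p \<Rightarrow> 'd"
  assumes ed: "extremally_disconnected S" and cP: "compact_space P" and hP: "Hausdorff_space P"
    and cont: "continuous_map P S \<pi>" and surj: "\<pi> ` topspace P = topspace S"
  shows "\<exists>\<sigma>. continuous_map S P \<sigma> \<and> (\<forall>s\<in>topspace S. \<pi> (\<sigma> s) = s)"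
proof -
  have hS: "Hausdorff_space S" using ed by (simp add: extremally_disconnected_def)
  have edc: "\<And>U. openin S U \<Longrightarrow> openin S (S closure_of U)" using ed by (simp add: extremally_disconnected_def)
  define A where "A = {U. openin P U \<and> \<pi> ` (topspace P - U) = topspace S}"
  have "\<forall>C\<in>chains A. \<Union>C \<in> A"
  proof
    fix C assume C: "C \<in> chains A"
    hence CA: "C \<subseteq> A" and ch: "chain\<^sub>\<subseteq> C" by (auto simp: chains_def)
    have op: "openin P (\<Union>C)" using CA by (auto simp: A_def)
    have "topspace S \<subseteq> \<pi> ` (topspace P - \<Union>C)"
    proof
      fix s assume s: "s \<in> topspace S"
      show "s \<in> \<pi> ` (topspace P - \<Union>C)"
      proof (cases "C = {}")
        case True then show ?thesis using s surj by auto
      next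
        case False
        define U where "U = (\<lambda>V. {x \<in> topspace P. \<pi> x \<in> {s}} - V) ` C"
        have clS: "closedin S {s}" using hS s by (simp add: closedin_Hausdorff_singleton)
        have fib: "closedin P {x \<in> topspace P. \<pi> x \<in> {s}}"
          using closedin_continuous_map_preimage[OF cont clS] .
        have "\<forall>K\<in>U. closedin P K" using CA fib by (auto simp: U_def A_def intro: closedin_diff)
        moreover have "\<forall>F. finite F \<and> F \<subseteq> U \<longrightarrow> \<Inter>F \<noteq> {}"
        proof (intro allI impI)
          fix F assume F: "finite F \<and> F \<subseteq> U"
          have "\<exists>G\<subseteq>C. finite G \<and> F = (\<lambda>V. {x \<in> topspace P. \<pi> x \<in> {s}} - V) ` G"
            using F unfolding U_def by (intro finite_subset_image) auto
          then obtain G where G: "G \<subseteq> C" "finite G" "F = (\<lambda>V. {x \<in> topspace P. \<pi> x \<in> {s}} - V) ` G"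
            by blast
          show "\<Inter>F \<noteq> {}"
          proof (cases "G = {}")
            case True then show ?thesis using G by auto
          next
            case False
            have "chain\<^sub>\<subseteq> G" using ch G(1) by (auto simp: chain_subset_def)
            then obtain V where V: "V \<in> G" "\<forall>W\<in>G. W \<subseteq> V" using finite_chain_max G False by blast
            have "s \<in> \<pi> ` (topspace P - V)" using V(1) G(1) CA s by (auto simp: A_def)
            then obtain y where y: "y \<in> topspace P" "y \<notin> V" "\<pi> y = s" by auto
            have "y \<in> \<Inter>F" using y V G(3) by auto
            then show ?thesis by blast
          qed
        qed
        ultimately have "\<Inter>U \<noteq> {}" using cP[unfolded compact_space_fip, rule_format, of U] by blast
        then obtain x where x: "x \<in> \<Inter>U" by blast
        obtain V0 where "V0 \<in> C" using False by blast
        then have "x \<in> topspace P" "\<pi> x = s" using x by (auto simp: U_def split: if_splits)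
        moreover have "x \<notin> \<Union>C" using x False by (auto simp: U_def split: if_splits)
        ultimately show ?thesis by auto
      qed
    qed
    moreover have "\<pi> ` (topspace P - \<Union>C) \<subseteq> topspace S"
      using continuous_map_image_subset_topspace[OF cont] by blast
    ultimately show "\<Union>C \<in> A" using op by (auto simp: A_def)
  qed
  then obtain M where M: "M \<in> A" and Mmax: "\<forall>X\<in>A. M \<subseteq> X \<longrightarrow> X = M"
    using Zorn_Lemma by blast
  define F where "F = topspace P - M"
  have Mo: "openin P M" and FS: "\<pi> ` F = topspace S" using M by (auto simp: A_def F_def)
  have Fcl: "closedin P F" unfolding F_def using Mo by (simp add: closedin_diff)
  have FP: "F \<subseteq> topspace P" by (simp add: F_def)
  have minimal: "F' = F" if "closedin P F'" "F' \<subseteq> F" "\<pi> ` F' = topspace S" for F'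
  proof -
    have F'P: "F' \<subseteq> topspace P" using that(1) by (simp add: closedin_subset)
    have "topspace P - F' \<in> A" using that F'P
      by (auto simp: A_def openin_diff Diff_Diff_Int Int_absorb1)
    moreover have "M \<subseteq> topspace P - F'" using that(2) openin_subset[OF Mo] by (auto simp: F_def)
    ultimately have "topspace P - F' = M" using Mmax by blast
    then show ?thesis using F'P by (auto simp: F_def)
  qed
  have star_open: "openin S (topspace S - \<pi> ` (F - U))" if "openin P U" for U
  proof -
    have "closedin P (F - U)" using Fcl that by (simp add: closedin_diff)
    then have "compactin P (F - U)" using cP by (simp add: closedin_compact_space)
    then have "compactin S (\<pi> ` (F - U))" using cont by (simp add: image_compactin)
    then have "closedin S (\<pi> ` (F - U))" using hS by (simp add: compactin_imp_closedin)
    then show ?thesis by (simp add: openin_diff)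
  qed
  have star_closure: "\<pi> u \<in> S closure_of (topspace S - \<pi> ` (F - U))"
    if U: "openin P U" "u \<in> U" "u \<in> F" for U u
    unfolding in_closure_of
  proof (intro conjI allI impI)
    show "\<pi> u \<in> topspace S" using FS U by auto
    fix T assume T: "\<pi> u \<in> T \<and> openin S T"
    define W where "W = U \<inter> {x \<in> topspace P. \<pi> x \<in> T}"
    have Wo: "openin P W" unfolding W_def using U T openin_continuous_map_preimage[OF cont] by blast
    have "F - W \<noteq> F" using U T FP by (auto simp: W_def)
    then have "\<pi> ` (F - W) \<noteq> topspace S"
      using minimal[of "F - W"] Fcl Wo by (auto simp: closedin_diff)
    moreover have "\<pi> ` (F - W) \<subseteq> topspace S" using FS by auto
    ultimately obtain t where t: "t \<in> topspace S" "t \<notin> \<pi> ` (F - W)" by blast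
    then obtain y where y: "y \<in> F" "\<pi> y = t" using FS by (metis imageE)
    have "y \<in> W" using y t by auto
    then have "t \<in> T" using y by (auto simp: W_def)
    moreover have "t \<notin> \<pi> ` (F - U)" using t(2) by (auto simp: W_def)
    ultimately show "\<exists>y. y \<in> topspace S - \<pi> ` (F - U) \<and> y \<in> T" using t(1) by blast
  qed
  have inj: "inj_on \<pi> F"
  proof (rule inj_onI, rule ccontr)
    fix a b assume ab: "a \<in> F" "b \<in> F" "\<pi> a = \<pi> b" "a \<noteq> b"
    have aP: "a \<in> topspace P" and bP: "b \<in> topspace P" using FP ab(1,2) by auto
    have "\<exists>U V. openin P U \<and> openin P V \<and> a \<in> U \<and> b \<in> V \<and> disjnt U V"
      using hP aP bP ab(4) unfolding Hausdorff_space_def by blast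
    then obtain U V where UV: "openin P U" "openin P V" "a \<in> U" "b \<in> V" "disjnt U V"
      by blast
    define U' where "U' = topspace S - \<pi> ` (F - U)"
    define V' where "V' = topspace S - \<pi> ` (F - V)"
    have UV'o: "openin S U'" "openin S V'" using star_open UV by (auto simp: U'_def V'_def)
    have "U' \<inter> V' = {}"
    proof (rule ccontr)
      assume "U' \<inter> V' \<noteq> {}"
      then obtain t where t: "t \<in> U'" "t \<in> V'" by blast
      have "t \<in> topspace S" using t(1) by (simp add: U'_def)
      then obtain y where y: "y \<in> F" "\<pi> y = t" using FS by (metis imageE)
      have "y \<in> U" "y \<in> V" using y t by (auto simp: U'_def V'_def)
      then show False using UV(5) by (auto simp: disjnt_def)
    qed
    then have "V' \<inter> S closure_of U' = {}"
      using openin_Int_closure_of_eq_empty[OF UV'o(2), of U'] by (simp add: Int_commute)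
    then have "S closure_of U' \<inter> S closure_of V' = {}"
      using openin_Int_closure_of_eq_empty[OF edc[OF UV'o(1)], of V'] by (simp add: Int_commute)
    moreover have "\<pi> a \<in> S closure_of U'" using star_closure[OF UV(1) UV(3) ab(1)] by (simp add: U'_def)
    moreover have "\<pi> a \<in> S closure_of V'" using star_closure[OF UV(2) UV(4) ab(2)] ab(3) by (simp add: V'_def)
    ultimately show False by blast
  qed
  define Q where "Q = subtopology P F"
  have tQ: "topspace Q = F" unfolding Q_def by (rule topspace_subtopology_subset[OF FP])
  have cQ: "compact_space Q" unfolding Q_def
    by (rule compact_space_subtopology, rule closedin_compact_space[OF cP Fcl])
  have contQ: "continuous_map Q S \<pi>" unfolding Q_def by (rule continuous_map_from_subtopology[OF cont])
  have "closed_map Q S \<pi>" using continuous_imp_closed_map[OF contQ cQ hS] .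
  then have "homeomorphic_map Q S \<pi>"
    using bijective_closed_imp_homeomorphic_map[OF contQ] tQ FS inj by simp
  then obtain \<sigma> where \<sigma>: "homeomorphic_maps Q S \<pi> \<sigma>" using homeomorphic_map_maps by blast
  then have "continuous_map S P \<sigma>" unfolding homeomorphic_maps_def Q_def
    using continuous_map_into_fulltopology by blast
  moreover have "\<forall>s\<in>topspace S. \<pi> (\<sigma> s) = s" using \<sigma> unfolding homeomorphic_maps_def by blast
  ultimately show ?thesis by blast
qed


theorem mainTheorem1:
  fixes f :: "'a::{topological_ab_group_add, t2_space} \<Rightarrow> 'b::{topological_ab_group_add, t2_space}"
    and g :: "'b \<Rightarrow> 'c::{topological_ab_group_add, t2_space}"
  assumes f_hom: "\<And>x y. f (x + y) = f x + f y"
    and g_hom: "\<And>x y. g (x + y) = g x + g y"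
    and f_cont: "continuous_on UNIV f"
    and g_cont: "continuous_on UNIV g"
    and f_inj: "inj f"
    and exact_mid: "range f = {b. g b = 0}"
    and g_surj: "surj g"
    and f_closed: "closed_map euclidean euclidean f"
    and compact_lift: "\<And>K. compact K \<Longrightarrow> \<exists>B'. compact B' \<and> K \<subseteq> g ` B'"
  shows "\<forall>S :: 'd topology. extremally_disconnected S \<longrightarrow>
           short_exact (cond_sections S :: ('d \<Rightarrow> 'a) set) (cond_sections S) (cond_sections S)
             (cond_map f) (cond_map g) (\<lambda>_. 0)"
proof (intro allI impI)
  fix S :: "'d topology" assume ed: "extremally_disconnected S"
  have f0: "f 0 = 0" using f_hom[of 0 0] by simp
  have g0: "g 0 = 0" using g_hom[of 0 0] by simp
  have fc: "continuous_map euclidean euclidean f" using f_cont by simp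
  have gc: "continuous_map euclidean euclidean g" using g_cont by simp
  have img_f: "cond_map f ` cond_sections S \<subseteq> (cond_sections S :: ('d \<Rightarrow> 'b) set)"
  proof
    fix y assume "y \<in> cond_map f ` cond_sections S"
    then obtain x where x: "x \<in> cond_sections S" "y = f \<circ> x" by (auto simp: cond_map_def)
    have "continuous_map S euclidean x" using x(1) by (simp add: cond_sections_def)
    then have "continuous_map S euclidean (f \<circ> x)" using fc by (rule continuous_map_compose)
    moreover have "\<forall>s. s \<notin> topspace S \<longrightarrow> (f \<circ> x) s = 0" using x(1) f0 by (simp add: cond_sections_def)
    ultimately show "y \<in> cond_sections S" using x(2) by (simp add: cond_sections_def)
  qed
  have img_g: "cond_map g ` cond_sections S \<subseteq> (cond_sections S :: ('d \<Rightarrow> 'c) set)"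
  proof
    fix y assume "y \<in> cond_map g ` cond_sections S"
    then obtain x where x: "x \<in> cond_sections S" "y = g \<circ> x" by (auto simp: cond_map_def)
    have "continuous_map S euclidean x" using x(1) by (simp add: cond_sections_def)
    then have "continuous_map S euclidean (g \<circ> x)" using gc by (rule continuous_map_compose)
    moreover have "\<forall>s. s \<notin> topspace S \<longrightarrow> (g \<circ> x) s = 0" using x(1) g0 by (simp add: cond_sections_def)
    ultimately show "y \<in> cond_sections S" using x(2) by (simp add: cond_sections_def)
  qed
  have inj: "inj_on (cond_map f) (cond_sections S :: ('d \<Rightarrow> 'a) set)"
  proof (rule inj_onI)
    fix x y :: "'d \<Rightarrow> 'a" assume "cond_map f x = cond_map f y"
    then have "\<And>s. f (x s) = f (y s)" by (simp add: cond_map_def fun_eq_iff)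
    then show "x = y" using f_inj by (auto simp: fun_eq_iff inj_eq)
  qed
  have ker: "cond_map f ` (cond_sections S :: ('d \<Rightarrow> 'a) set) =
      {y \<in> cond_sections S. cond_map g y = (\<lambda>_. 0)}"
  proof
    show "cond_map f ` (cond_sections S :: ('d \<Rightarrow> 'a) set) \<subseteq> {y \<in> cond_sections S. cond_map g y = (\<lambda>_. 0)}"
    proof
      fix y assume y: "y \<in> cond_map f ` (cond_sections S :: ('d \<Rightarrow> 'a) set)"
      have "\<And>a. g (f a) = 0" using exact_mid by blast
      moreover obtain x where "y = f \<circ> x" using y by (auto simp: cond_map_def)
      ultimately have "cond_map g y = (\<lambda>_. 0)" by (simp add: cond_map_def fun_eq_iff)
      moreover have "y \<in> cond_sections S" using y img_f by blast
      ultimately show "y \<in> {y \<in> cond_sections S. cond_map g y = (\<lambda>_. 0)}" by blast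
    qed
  next
    show "{y \<in> cond_sections S. cond_map g y = (\<lambda>_. 0)} \<subseteq> cond_map f ` (cond_sections S :: ('d \<Rightarrow> 'a) set)"
    proof
      fix \<psi> :: "'d \<Rightarrow> 'b" assume "\<psi> \<in> {y \<in> cond_sections S. cond_map g y = (\<lambda>_. 0)}"
      then have \<psi>: "continuous_map S euclidean \<psi>" "\<And>s. s \<notin> topspace S \<Longrightarrow> \<psi> s = 0"
        and g\<psi>: "\<And>s. g (\<psi> s) = 0"
        by (auto simp: cond_sections_def cond_map_def fun_eq_iff)
      have inr: "\<And>s. \<psi> s \<in> range f" using g\<psi> exact_mid by blast
      define \<phi> where "\<phi> = (\<lambda>s. inv f (\<psi> s))"
      have eq: "cond_map f \<phi> = \<psi>" using inr by (auto simp: cond_map_def \<phi>_def fun_eq_iff f_inv_into_f)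
      have z: "\<phi> s = 0" if "s \<notin> topspace S" for s
        using \<psi>(2)[OF that] f0 inv_f_f[OF f_inj, of 0] by (simp add: \<phi>_def)
      have "continuous_map S euclidean \<phi>"
        unfolding continuous_map_closedin
      proof (intro conjI allI impI)
        show "\<phi> \<in> topspace S \<rightarrow> topspace euclidean" by simp
        fix C :: "'a set" assume C: "closedin euclidean C"
        have fC: "closedin euclidean (f ` C)" using f_closed C by (simp add: closed_map_def)
        have "{x \<in> topspace S. \<phi> x \<in> C} = {x \<in> topspace S. \<psi> x \<in> f ` C}"
        proof (intro Collect_cong conj_cong refl iffI)
          fix x assume "\<phi> x \<in> C"
          then show "\<psi> x \<in> f ` C" using inr[of x] by (metis \<phi>_def f_inv_into_f imageI)
        next
          fix x assume "\<psi> x \<in> f ` C"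
          then show "\<phi> x \<in> C" using f_inj by (auto simp: \<phi>_def)
        qed
        then show "closedin S {x \<in> topspace S. \<phi> x \<in> C}"
          using closedin_continuous_map_preimage[OF \<psi>(1) fC] by simp
      qed
      then have "\<phi> \<in> cond_sections S" using z by (simp add: cond_sections_def)
      then show "\<psi> \<in> cond_map f ` cond_sections S" using eq by blast
    qed
  qed
  have surjg: "cond_map g ` cond_sections S = (cond_sections S :: ('d \<Rightarrow> 'c) set)"
  proof
    show "cond_map g ` cond_sections S \<subseteq> (cond_sections S :: ('d \<Rightarrow> 'c) set)" by (rule img_g)
  next
    show "(cond_sections S :: ('d \<Rightarrow> 'c) set) \<subseteq> cond_map g ` cond_sections S"
    proof
      fix chi :: "'d \<Rightarrow> 'c" assume "chi \<in> cond_sections S"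
      then have chi: "continuous_map S euclidean chi" "\<And>s. s \<notin> topspace S \<Longrightarrow> chi s = 0"
        by (auto simp: cond_sections_def)
      have cS: "compact_space S" using ed by (simp add: extremally_disconnected_def)
      have cSt: "compactin S (topspace S)" using cS by (simp add: compact_space_def)
      have "compactin euclidean (chi ` topspace S)" using image_compactin[OF cSt chi(1)] .
      then have "compact (chi ` topspace S)" by simp
      then obtain B' where B': "compact B'" "chi ` topspace S \<subseteq> g ` B'" using compact_lift by blast
      define T where "T = {z \<in> topspace S \<times> B'. chi (fst z) = g (snd z)}"
      define PT where "PT = prod_topology S (euclidean :: 'b topology)"
      define P where "P = subtopology PT T"
      have c1: "continuous_map PT euclidean (chi \<circ> fst)" unfolding PT_def
        using continuous_map_fst chi(1) by (rule continuous_map_compose)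
      have c2: "continuous_map PT euclidean (g \<circ> snd)" unfolding PT_def
        using continuous_map_snd gc by (rule continuous_map_compose)
      have cl1: "closedin PT {z \<in> topspace PT. (chi \<circ> fst) z = (g \<circ> snd) z}"
        using closedin_continuous_maps_eq[OF Hausdorff_euclidean_t2 c1 c2] .
      have cl2: "closedin PT (topspace S \<times> B')" unfolding PT_def
        using B'(1) by (simp add: closedin_prod_Times_iff compact_imp_closed)
      have TT: "T = {z \<in> topspace PT. (chi \<circ> fst) z = (g \<circ> snd) z} \<inter> (topspace S \<times> B')"
        by (auto simp: T_def PT_def)
      have clT: "closedin PT T" using cl1 cl2 TT by (simp add: closedin_Int)
      have "compactin PT (topspace S \<times> B')" unfolding PT_def using cSt B'(1)
        by (simp add: compactin_Times)
      moreover have "T \<subseteq> topspace S \<times> B'" by (auto simp: T_def)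
      ultimately have "compactin PT T" using clT by (metis closed_compactin)
      then have cP: "compact_space P" unfolding P_def by (rule compact_space_subtopology)
      have hS: "Hausdorff_space S" using ed by (simp add: extremally_disconnected_def)
      have "Hausdorff_space PT" unfolding PT_def
        by (simp add: Hausdorff_space_prod_topology hS Hausdorff_euclidean_t2)
      then have hP: "Hausdorff_space P" unfolding P_def by (rule Hausdorff_space_subtopology)
      have contP: "continuous_map P S fst" unfolding P_def PT_def
        by (rule continuous_map_from_subtopology[OF continuous_map_fst])
      have tP: "topspace P = T" unfolding P_def PT_def
        by (rule topspace_subtopology_subset) (auto simp: T_def)
      have "fst ` topspace P = topspace S"
      proof
        show "fst ` topspace P \<subseteq> topspace S" by (auto simp: tP T_def)
        show "topspace S \<subseteq> fst ` topspace P"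
        proof
          fix s assume s: "s \<in> topspace S"
          then obtain b where b: "b \<in> B'" "chi s = g b" using B'(2) by blast
          then have "(s, b) \<in> T" using s by (simp add: T_def)
          then show "s \<in> fst ` topspace P" using tP by force
        qed
      qed
      then obtain \<sigma> where \<sigma>: "continuous_map S P \<sigma>" "\<forall>s\<in>topspace S. fst (\<sigma> s) = s"
        using ed_section[OF ed cP hP contP] by blast
      have \<sigma>T: "\<sigma> s \<in> T" if "s \<in> topspace S" for s
        using \<sigma>(1) that tP by (auto simp: continuous_map_def)
      define \<psi> where "\<psi> = (\<lambda>s. if s \<in> topspace S then snd (\<sigma> s) else 0)"
      have "continuous_map S PT \<sigma>" using \<sigma>(1) unfolding P_def by (rule continuous_map_into_fulltopology)
      then have "continuous_map S euclidean (snd \<circ> \<sigma>)" unfolding PT_def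
        using continuous_map_snd by (rule continuous_map_compose)
      then have "continuous_map S euclidean \<psi>"
        by (rule continuous_map_eq) (simp add: \<psi>_def)
      then have \<psi>s: "\<psi> \<in> cond_sections S" by (simp add: cond_sections_def \<psi>_def)
      have "cond_map g \<psi> = chi"
      proof
        fix s show "cond_map g \<psi> s = chi s"
        proof (cases "s \<in> topspace S")
          case True
          then have "chi (fst (\<sigma> s)) = g (snd (\<sigma> s))" using \<sigma>T[OF True] by (simp add: T_def)
          then show ?thesis using True \<sigma>(2) by (simp add: cond_map_def \<psi>_def)
        next
          case False then show ?thesis using chi(2) g0 by (simp add: cond_map_def \<psi>_def)
        qed
      qed
      then show "chi \<in> cond_map g ` cond_sections S" using \<psi>s by blast
    qed
  qed
  show "short_exact (cond_sections S :: ('d \<Rightarrow> 'a) set) (cond_sections S) (cond_sections S)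
             (cond_map f) (cond_map g) (\<lambda>_. 0)"
    unfolding short_exact_def by (intro conjI img_f img_g inj ker surjg)
qed

end
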